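(* Let $\lambda>0$, $\eta\in(0,1)$, $g_l^*>0$ and let $t\ge 1$ be an integer. For a finite instance set $I$ with real gradients $g_i$, let $V(I)=-\frac{\sum_{i\in I}g_i}{|I|+\lambda}$ and define the clipped leaf value $$V_t(I)=V(I)\cdot\min\left(1,\frac{g_l^*(1-\eta)^{t-1}}{|V(I)|}\right)$$ (with $V_t(I)=0$ if $V(I)=0$). Let $\Delta V_t$ be the supremum of $|V_t(I\cup\{s\})-V_t(I)|$ over all finite instance sets $I$ and instances $s\notin I$ such that all gradients involved satisfy $|g_i|\le g_l^*$. Then $$\Delta V_t\le \min\left(\frac{g_l^*}{1+\lambda},\,2g_l^*(1-\eta)^{t-1}\right).$$
   Context: This is the sensitivity of leaf values in the tree of the $t$-th boosting iteration when gradient-based data filtering (discarding instances with $|g_i|>g_l^*$, where $g_l^*=\max_{y_p\in[-1,1]}|\partial l(y_p,y)/\partial y|_{y=0}|$ for the loss $l$) and geometric leaf clipping (clipping leaf values in magnitude to $g_l^*(1-\eta)^{t-1}$, $\eta$ the shrinkage rate) are applied. *)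

theory Defs
  imports Complex_Main
begin

definition leaf_value :: "real \<Rightarrow> ('a \<Rightarrow> real) \<Rightarrow> 'a set \<Rightarrow> real" where
  "leaf_value lam g I = - (\<Sum>i\<in>I. g i) / (real (card I) + lam)"

definition clipped_leaf_value ::
  "real \<Rightarrow> real \<Rightarrow> real \<Rightarrow> nat \<Rightarrow> ('a \<Rightarrow> real) \<Rightarrow> 'a set \<Rightarrow> real" where
  "clipped_leaf_value lam eta gl t g I =
     (let v = leaf_value lam g I in
      if v = 0 then 0 else v * min 1 (gl * (1 - eta) ^ (t - 1) / \<bar>v\<bar>))"

end

theory Submission
  imports Defs
begin

lemma clip_eq:
  fixes v C :: real assumes "C \<ge> 0"
  shows "(if v = 0 then 0 else v * min 1 (C / \<bar>v\<bar>)) = max (-C) (min C v)"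
proof (cases "v = 0")
  case True thus ?thesis using assms by simp
next
  case False
  show ?thesis
  proof (cases "C \<le> \<bar>v\<bar>")
    case True
    hence "min 1 (C / \<bar>v\<bar>) = C / \<bar>v\<bar>" using False by (simp add: field_simps)
    moreover have "v * (C / \<bar>v\<bar>) = (if v > 0 then C else -C)" using False by (auto simp: field_simps)
    ultimately show ?thesis using False True assms by auto
  next
    case c: False
    hence "min 1 (C / \<bar>v\<bar>) = 1" using False by (simp add: field_simps)
    thus ?thesis using False c by auto
  qed
qed

lemma clip_lip:
  fixes a b C :: real assumes "C \<ge> 0"
  shows "\<bar>max (-C) (min C a) - max (-C) (min C b)\<bar> \<le> \<bar>a - b\<bar>"
    and "\<bar>max (-C) (min C a) - max (-C) (min C b)\<bar> \<le> 2 * C"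
  using assms by (auto split: split_max split_min abs_split)

lemma leaf_diff:
  fixes lam gl :: real
  assumes "lam > 0" "gl > 0" "finite I" "s \<notin> I" "\<forall>i\<in>insert s I. \<bar>g i\<bar> \<le> gl"
  shows "\<bar>leaf_value lam g (insert s I) - leaf_value lam g I\<bar> \<le> gl / (1 + lam)"
proof -
  define n where "n = real (card I)"
  define S where "S = (\<Sum>i\<in>I. g i)"
  have n0: "n \<ge> 0" by (simp add: n_def)
  have cI: "real (card (insert s I)) = n + 1" using assms by (simp add: n_def)
  have sI: "(\<Sum>i\<in>insert s I. g i) = g s + S" using assms by (simp add: S_def)
  have Sb: "\<bar>S\<bar> \<le> n * gl"
  proof -
    have "\<bar>S\<bar> \<le> (\<Sum>i\<in>I. \<bar>g i\<bar>)" unfolding S_def by (rule sum_abs)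
    also have "\<dots> \<le> (\<Sum>i\<in>I. gl)" using assms by (intro sum_mono) auto
    finally show ?thesis by (simp add: n_def)
  qed
  have gs: "\<bar>g s\<bar> \<le> gl" using assms by auto
  have p1: "n + lam > 0" using n0 assms by linarith
  have p2: "n + 1 + lam > 0" using n0 assms by linarith
  have eq: "leaf_value lam g (insert s I) - leaf_value lam g I
      = (S - g s * (n + lam)) / ((n + lam) * (n + 1 + lam))"
    unfolding leaf_value_def cI sI S_def[symmetric] n_def[symmetric]
    using p1 p2 by (simp add: field_simps)
  have num: "\<bar>S - g s * (n + lam)\<bar> \<le> (2*n + lam) * gl"
  proof -
    have "\<bar>g s * (n + lam)\<bar> \<le> gl * (n + lam)" using gs p1
      by (simp add: abs_mult mult_right_mono)
    thus ?thesis using Sb by (simp add: algebra_simps)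
  qed
  have key: "(2*n + lam) * (1 + lam) \<le> (n + lam) * (n + 1 + lam)"
  proof -
    have "(n + lam) * (n + 1 + lam) - (2*n + lam) * (1 + lam) = n * n - n"
      by (simp add: algebra_simps)
    moreover have "n * n - n \<ge> 0"
    proof (cases "card I")
      case 0 thus ?thesis by (simp add: n_def)
    next
      case (Suc m) hence "n \<ge> 1" by (simp add: n_def)
      thus ?thesis by (simp add: algebra_simps)
    qed
    ultimately show ?thesis by linarith
  qed
  have "\<bar>leaf_value lam g (insert s I) - leaf_value lam g I\<bar>
      = \<bar>S - g s * (n + lam)\<bar> / ((n + lam) * (n + 1 + lam))"
    using eq p1 p2 by (simp add: abs_divide abs_mult)
  also have "\<dots> \<le> (2*n + lam) * gl / ((n + lam) * (n + 1 + lam))"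
    using num p1 p2 by (intro divide_right_mono) auto
  also have "\<dots> \<le> gl / (1 + lam)"
  proof -
    have D: "(n + lam) * (n + 1 + lam) > 0" using p1 p2 by simp
    have L: "1 + lam > 0" using assms by simp
    have "((2*n + lam) * gl) * (1 + lam) \<le> gl * ((n + lam) * (n + 1 + lam))"
      using mult_left_mono[OF key, of gl] assms by (simp add: algebra_simps)
    thus ?thesis using D L by (simp add: frac_le_eq divide_le_eq le_divide_eq)
  qed
  finally show ?thesis .
qed

theorem corollary2:
  fixes lam eta gl :: real and t :: nat
  assumes "lam > 0" and "0 < eta" and "eta < 1" and "gl > 0" and "t \<ge> 1"
  shows "Sup {\<bar>clipped_leaf_value lam eta gl t g (insert s I)
               - clipped_leaf_value lam eta gl t g I\<bar> |
             (I :: 'a set) (s :: 'a) (g :: 'a \<Rightarrow> real).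
             finite I \<and> s \<notin> I \<and> (\<forall>i\<in>insert s I. \<bar>g i\<bar> \<le> gl)}
         \<le> min (gl / (1 + lam)) (2 * gl * (1 - eta) ^ (t - 1))"
proof (rule cSup_least)
  let ?C = "gl * (1 - eta) ^ (t - 1)"
  have C0: "?C \<ge> 0" using assms by simp
  show "{\<bar>clipped_leaf_value lam eta gl t g (insert s I)
               - clipped_leaf_value lam eta gl t g I\<bar> |
             (I :: 'a set) (s :: 'a) (g :: 'a \<Rightarrow> real).
             finite I \<and> s \<notin> I \<and> (\<forall>i\<in>insert s I. \<bar>g i\<bar> \<le> gl)} \<noteq> {}"
  proof -
    have "finite ({}::'a set) \<and> (undefined::'a) \<notin> {} \<and> (\<forall>i\<in>insert undefined {}. \<bar>(\<lambda>_::'a. 0::real) i\<bar> \<le> gl)"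
      using assms by simp
    thus ?thesis by (simp only: ex_in_conv[symmetric] mem_Collect_eq) fast
  qed
  fix x assume "x \<in> {\<bar>clipped_leaf_value lam eta gl t g (insert s I)
               - clipped_leaf_value lam eta gl t g I\<bar> |
             (I :: 'a set) (s :: 'a) (g :: 'a \<Rightarrow> real).
             finite I \<and> s \<notin> I \<and> (\<forall>i\<in>insert s I. \<bar>g i\<bar> \<le> gl)}"
  then obtain I :: "'a set" and s :: 'a and g :: "'a \<Rightarrow> real" where x: "x = \<bar>clipped_leaf_value lam eta gl t g (insert s I)
               - clipped_leaf_value lam eta gl t g I\<bar>"
    and h: "finite I" "s \<notin> I" "\<forall>i\<in>insert s I. \<bar>g i\<bar> \<le> gl" by (simp only: mem_Collect_eq) fast
  have cl: "clipped_leaf_value lam eta gl t g J = max (-?C) (min ?C (leaf_value lam g J))" for J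
    unfolding clipped_leaf_value_def Let_def using clip_eq[OF C0] by simp
  have "x \<le> \<bar>leaf_value lam g (insert s I) - leaf_value lam g I\<bar>"
    unfolding x cl by (rule clip_lip(1)[OF C0])
  also have "\<dots> \<le> gl / (1 + lam)" using leaf_diff[OF assms(1) assms(4) h] .
  finally have 1: "x \<le> gl / (1 + lam)" .
  have 2: "x \<le> 2 * gl * (1 - eta) ^ (t - 1)"
    unfolding x cl using clip_lip(2)[OF C0] by (simp only: mult.assoc)
  show "x \<le> min (gl / (1 + lam)) (2 * gl * (1 - eta) ^ (t - 1))" using 1 2 by simp
qed

end
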